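(* Consider a constrained online convex optimization problem: $\mathcal{F}\subset\mathbb{R}^d$ is a convex set with bounded $\ell_\infty$-diameter $D_\infty=\max_{\boldsymbol{x},\boldsymbol{y}\in\mathcal{F}}\Vert\boldsymbol{x}-\boldsymbol{y}\Vert_\infty$, and $f_1,\dots,f_T$ are convex loss functions with $\Vert\nabla f_t(\boldsymbol{\theta})\Vert_\infty\le G_\infty$ for all $t\in[T]$ and $\boldsymbol{\theta}\in\mathcal{F}$. Let the iterates $\boldsymbol{\theta}_t\in\mathcal{F}$ be generated by AdaSGDMax with step size $\eta_t=\eta/\sqrt{t\hat v_t/d}$ for some $\eta>0$, and assume $\hat v_1>0$. Then the regret $R_T:=\sum_{t=1}^T f_t(\boldsymbol{\theta}_t)-\min_{\boldsymbol{\theta}^*\in\mathcal{F}}\sum_{t=1}^T f_t(\boldsymbol{\theta}^* )$ satisfies $$R_T\le \frac{D_\infty^2\sqrt{d\hat v_T T}}{2\eta}+\frac{d^{3/2}G_\infty^2\eta(2\sqrt{T}-1)}{2\sqrt{\hat v_1}}.$$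
   Context: AdaSGDMax in the online setting: with $\boldsymbol{g}_t=\nabla f_t(\boldsymbol{\theta}_t)$, $v_0=0$, $\hat v_0=0$ and a fixed $\beta_2\in[0,1)$, set $v_t=\beta_2 v_{t-1}+(1-\beta_2)\Vert\boldsymbol{g}_t\Vert_2^2$, $\hat v_t=\max\{\hat v_{t-1},v_t\}$, and $\boldsymbol{\theta}_{t+1}=\Pi_{\mathcal{F}}(\boldsymbol{\theta}_t-\eta_t\boldsymbol{g}_t)$, where $\Pi_{\mathcal{F}}(\boldsymbol{x})=\arg\min_{\boldsymbol{y}\in\mathcal{F}}\Vert\boldsymbol{x}-\boldsymbol{y}\Vert_2$ is Euclidean projection and $\boldsymbol{\theta}_1\in\mathcal{F}$. *)

theory Defs
  imports "HOL-Analysis.Analysis"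
begin

definition proj_set :: "('a::real_normed_vector) set \<Rightarrow> 'a \<Rightarrow> 'a" where
  "proj_set F x = (SOME y. y \<in> F \<and> (\<forall>z\<in>F. dist x y \<le> dist x z))"

text \<open>AdaSGDMax state.  adasgdmax_state ... t = (theta_(t+1), v_t, hat v_t),
  with the gradient oracle grad t theta = nabla f_t(theta), theta_1 = th1,
  v_0 = 0, hat v_0 = 0, step size eta_t = eta / sqrt(t * hat v_t / d).\<close>
fun adasgdmax_state ::
  "(real^'d) set \<Rightarrow> (nat \<Rightarrow> real^'d \<Rightarrow> real^'d) \<Rightarrow> real \<Rightarrow> real \<Rightarrow> real^'d
   \<Rightarrow> nat \<Rightarrow> (real^'d) \<times> real \<times> real" where
  "adasgdmax_state F grad \<beta>2 \<eta> th1 0 = (th1, 0, 0)"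
| "adasgdmax_state F grad \<beta>2 \<eta> th1 (Suc t) =
     (let (th, v, hv) = adasgdmax_state F grad \<beta>2 \<eta> th1 t;
          g = grad (Suc t) th;
          v' = \<beta>2 * v + (1 - \<beta>2) * (norm g)\<^sup>2;
          hv' = max hv v';
          eta_t = \<eta> / sqrt (real (Suc t) * hv' / real CARD('d))
      in (proj_set F (th - eta_t *\<^sub>R g), v', hv'))"

definition ada_theta where
  "ada_theta F grad \<beta>2 \<eta> th1 t = fst (adasgdmax_state F grad \<beta>2 \<eta> th1 (t - 1))"

definition ada_vhat where
  "ada_vhat F grad \<beta>2 \<eta> th1 t = snd (snd (adasgdmax_state F grad \<beta>2 \<eta> th1 t))"

definition linf_diam :: "(real^'d) set \<Rightarrow> real" where
  "linf_diam F = (SUP p\<in>F \<times> F. infnorm (fst p - snd p))"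

end

theory Submission
  imports Defs
begin

lemma grad_ineq:
  fixes f :: "'a::real_inner \<Rightarrow> real"
  assumes cf: "convex_on F f" and xF: "x \<in> F" and yF: "y \<in> F"
    and d: "(f has_derivative (\<lambda>h. g \<bullet> h)) (at x)"
  shows "f x + g \<bullet> (y - x) \<le> f y"
proof -
  let ?h = "y - x"
  have d1: "((\<lambda>s. x + s *\<^sub>R ?h) has_derivative (\<lambda>s. s *\<^sub>R ?h)) (at 0)"
    by (auto intro!: derivative_eq_intros)
  have d2: "(f has_derivative (\<lambda>h. g \<bullet> h)) (at ((\<lambda>s. x + s *\<^sub>R ?h) 0))" using d by simp
  have "((\<lambda>s. f (x + s *\<^sub>R ?h)) has_derivative (\<lambda>s. g \<bullet> (s *\<^sub>R ?h))) (at 0)"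
    using has_derivative_compose[OF d1 d2] by simp
  moreover have "(\<lambda>s. g \<bullet> (s *\<^sub>R ?h)) = (*) (g \<bullet> ?h)" by (auto simp: inner_scaleR_right)
  ultimately have "((\<lambda>s. f (x + s *\<^sub>R ?h)) has_field_derivative (g \<bullet> ?h)) (at 0)"
    by (simp add: has_field_derivative_def)
  then have "((\<lambda>s. (f (x + s *\<^sub>R ?h) - f x) / s) \<longlongrightarrow> g \<bullet> ?h) (at 0)"
    by (simp add: DERIV_def)
  then have L: "((\<lambda>s. (f (x + s *\<^sub>R ?h) - f x) / s) \<longlongrightarrow> g \<bullet> ?h) (at_right 0)"
    by (simp add: filterlim_at_split)
  have ev: "eventually (\<lambda>s. (f (x + s *\<^sub>R ?h) - f x) / s \<le> f y - f x) (at_right (0::real))"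
  proof -
    have "eventually (\<lambda>s. s < (1::real)) (at_right 0)"
      by (subst eventually_at_right[of 0 1]) (auto intro!: exI[of _ 1])
    moreover have "eventually (\<lambda>s. s > (0::real)) (at_right 0)"
      by (simp add: eventually_at_filter)
    ultimately show ?thesis
    proof eventually_elim
      case (elim s)
      have "x + s *\<^sub>R ?h = (1 - s) *\<^sub>R x + s *\<^sub>R y" by (simp add: algebra_simps)
      then have "f (x + s *\<^sub>R ?h) \<le> (1 - s) * f x + s * f y"
        using convex_onD[OF cf, of s x y] elim xF yF by simp
      then show ?case using elim by (simp add: divide_simps algebra_simps)
    qed
  qed
  have "g \<bullet> ?h \<le> f y - f x"
    by (rule tendsto_upperbound[OF L ev]) simp
  then show ?thesis by simp
qed

lemma sum_inv_sqrt: "n \<ge> 1 \<Longrightarrow> (\<Sum>t=1..n. 1 / sqrt (real t)) \<le> 2 * sqrt (real n) - 1"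
proof (induction n)
  case 0 then show ?case by simp
next
  case (Suc n)
  show ?case
  proof (cases "n = 0")
    case True then show ?thesis by simp
  next
    case False
    let ?s = "sqrt (real n)" and ?u = "sqrt (real (Suc n))"
    have u2: "?u^2 = ?s^2 + 1" by simp
    have su: "?s \<le> ?u" by simp
    have up: "?u > 0" by simp
    have "1 \<le> 2 * ?u^2 - 2 * ?u * ?s"
    proof -
      have "2 * ?u^2 - 2 * ?u * ?s = (?u - ?s)^2 + 1" using u2 by (simp add: power2_eq_square algebra_simps)
      then show ?thesis by simp
    qed
    then have key: "1 / ?u \<le> 2 * (?u - ?s)" using up
      by (simp add: divide_simps power2_eq_square algebra_simps)
    have "(\<Sum>t=1..Suc n. 1 / sqrt (real t)) = (\<Sum>t=1..n. 1 / sqrt (real t)) + 1 / ?u"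
      by simp
    also have "\<dots> \<le> 2 * ?s - 1 + 1 / ?u" using Suc False by simp
    also have "\<dots> \<le> 2 * ?u - 1" using key by simp
    finally show ?thesis .
  qed
qed

lemma telescope:
  fixes c a :: "nat \<Rightarrow> real"
  assumes mono: "\<And>t. t \<ge> 1 \<Longrightarrow> c t \<le> c (Suc t)"
    and c0: "\<And>t. t \<ge> 1 \<Longrightarrow> 0 \<le> c t"
    and a0: "\<And>t. t \<ge> 1 \<Longrightarrow> 0 \<le> a t" and aD: "\<And>t. t \<ge> 1 \<Longrightarrow> a t \<le> D"
  shows "n \<ge> 1 \<Longrightarrow> (\<Sum>t=1..n. c t * (a t - a (Suc t))) \<le> c n * D - c n * a (Suc n)"
proof (induction n)
  case 0 then show ?case by simp
next
  case (Suc n)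
  show ?case
  proof (cases "n = 0")
    case True then show ?thesis using aD[of 1] c0[of 1] by (simp add: algebra_simps mult_right_mono)
  next
    case False
    then have IH: "(\<Sum>t=1..n. c t * (a t - a (Suc t))) \<le> c n * D - c n * a (Suc n)" using Suc by simp
    have "c n * (D - a (Suc n)) \<le> c (Suc n) * (D - a (Suc n))"
      using mono[of n] aD[of "Suc n"] False by (intro mult_right_mono) auto
    then show ?thesis using IH by (simp add: algebra_simps)
  qed
qed

lemma state_fst_Suc:
  "fst (adasgdmax_state F grad b e th1 (Suc t)) =
     proj_set F (fst (adasgdmax_state F grad b e th1 t)
       - (e / sqrt (real (Suc t) * snd (snd (adasgdmax_state F grad b e th1 (Suc t))) / real CARD('d)))
         *\<^sub>R grad (Suc t) (fst (adasgdmax_state F grad b e th1 t)))"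
  for F :: "(real^'d) set"
  by (cases "adasgdmax_state F grad b e th1 t") (auto simp: Let_def)

lemma state_vh_Suc:
  "snd (snd (adasgdmax_state F grad b e th1 t)) \<le> snd (snd (adasgdmax_state F grad b e th1 (Suc t)))"
  for F :: "(real^'d) set"
  by (cases "adasgdmax_state F grad b e th1 t") (auto simp: Let_def)

lemma proj_eq: "proj_set F = closest_point F"
  by (auto simp: proj_set_def closest_point_def fun_eq_iff)

theorem theorem3p2:
  fixes F :: "(real^'d) set"
    and f :: "nat \<Rightarrow> real^'d \<Rightarrow> real"
    and grad :: "nat \<Rightarrow> real^'d \<Rightarrow> real^'d"
    and \<beta>2 \<eta> G :: real and th1 :: "real^'d" and T :: nat
  assumes conv: "convex F" and clo: "closed F" and bnd: "bounded F"
    and th1F: "th1 \<in> F"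
    and fconv: "\<And>t. t \<in> {1..T} \<Longrightarrow> convex_on F (f t)"
    and fgrad: "\<And>t x. t \<in> {1..T} \<Longrightarrow> x \<in> F \<Longrightarrow>
                   (f t has_derivative (\<lambda>h. grad t x \<bullet> h)) (at x)"
    and gbound: "\<And>t x. t \<in> {1..T} \<Longrightarrow> x \<in> F \<Longrightarrow> infnorm (grad t x) \<le> G"
    and beta: "0 \<le> \<beta>2" "\<beta>2 < 1"
    and eta: "\<eta> > 0"
    and T1: "T \<ge> 1"
    and v1: "ada_vhat F grad \<beta>2 \<eta> th1 1 > 0"
  shows "(\<Sum>t=1..T. f t (ada_theta F grad \<beta>2 \<eta> th1 t))
           - (INF th\<in>F. \<Sum>t=1..T. f t th)
         \<le> (linf_diam F)\<^sup>2 * sqrt (real CARD('d) * ada_vhat F grad \<beta>2 \<eta> th1 T * real T) / (2 * \<eta>)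
           + real CARD('d) powr (3/2) * G\<^sup>2 * \<eta> * (2 * sqrt (real T) - 1)
             / (2 * sqrt (ada_vhat F grad \<beta>2 \<eta> th1 1))"
proof -
  define th where "th t = ada_theta F grad \<beta>2 \<eta> th1 t" for t
  define vh where "vh t = ada_vhat F grad \<beta>2 \<eta> th1 t" for t
  define d where "d = real CARD('d)"
  define g where "g t = grad t (th t)" for t
  define c where "c t = sqrt (real t * vh t / d) / (2 * \<eta>)" for t
  define et where "et t = \<eta> / sqrt (real t * vh t / d)" for t
  define D where "D = linf_diam F"
  have d0: "d > 0" by (simp add: d_def)
  have Fne: "F \<noteq> {}" using th1F by auto
  have thS: "th (Suc t) = (if t = 0 then th1 else proj_set F (th t - et t *\<^sub>R g t))" for t
  proof (cases t)
    case 0 then show ?thesis by (simp add: th_def ada_theta_def)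
  next
    case (Suc k)
    then show ?thesis
      using state_fst_Suc[of F grad \<beta>2 \<eta> th1 k]
      by (simp add: th_def ada_theta_def et_def vh_def ada_vhat_def d_def g_def)
  qed
  have thF: "th t \<in> F" if "t \<ge> 1" for t
    using that
  proof (induction t)
    case 0 then show ?case by simp
  next
    case (Suc t) then show ?case
      using thS[of t] th1F closest_point_in_set[OF clo Fne] by (auto simp: proj_eq)
  qed
  have vmono: "vh t \<le> vh (t + k)" for t k
  proof (induction k)
    case 0 then show ?case by simp
  next
    case (Suc k) then show ?case
      using state_vh_Suc[of F grad \<beta>2 \<eta> th1 "t + k"] by (simp add: vh_def ada_vhat_def)
  qed
  have vpos: "vh t \<ge> vh 1" "vh t > 0" if "t \<ge> 1" for t
    using vmono[of 1 "t - 1"] that v1 by (auto simp: vh_def)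
  have G0: "G \<ge> 0"
    using gbound[of 1 th1] T1 th1F infnorm_pos_le[of "grad 1 th1"] by auto
  have gnorm: "(norm (g t))^2 \<le> d * G^2" if "t \<in> {1..T}" for t
  proof -
    have "norm (g t) \<le> sqrt d * infnorm (g t)"
      using norm_le_infnorm[of "g t"] by (simp add: d_def)
    also have "\<dots> \<le> sqrt d * G"
      using gbound[OF that thF] that d0 by (intro mult_left_mono) (auto simp: g_def)
    finally have "(norm (g t))^2 \<le> (sqrt d * G)^2"
      by (intro power_mono) auto
    then show ?thesis using d0 by (simp add: power_mult_distrib)
  qed
  have bddF: "bdd_above ((\<lambda>p. infnorm (fst p - snd p)) ` (F \<times> F))"
  proof -
    obtain B where B: "\<And>x. x \<in> F \<Longrightarrow> norm x \<le> B" using bnd bounded_iff by blast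
    have "infnorm (fst p - snd p) \<le> 2 * B" if "p \<in> F \<times> F" for p
    proof -
      have "infnorm (fst p - snd p) \<le> norm (fst p - snd p)" by (rule infnorm_le_norm)
      also have "\<dots> \<le> norm (fst p) + norm (snd p)" by (rule norm_triangle_ineq4)
      also have "\<dots> \<le> 2 * B" using B[of "fst p"] B[of "snd p"] that by auto
      finally show ?thesis .
    qed
    then show ?thesis by (intro bdd_aboveI2[where M="2 * B"]) auto
  qed
  have distD: "(norm (x - y))^2 \<le> d * D^2" if "x \<in> F" "y \<in> F" for x y
  proof -
    have i: "infnorm (x - y) \<le> D"
      unfolding D_def linf_diam_def
      using cSUP_upper[OF _ bddF, of "(x, y)"] that by auto
    have "norm (x - y) \<le> sqrt d * infnorm (x - y)"
      using norm_le_infnorm[of "x - y"] by (simp add: d_def)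
    also have "\<dots> \<le> sqrt d * D" using i d0 by (intro mult_left_mono) auto
    finally have "(norm (x - y))^2 \<le> (sqrt d * D)^2" by (intro power_mono) auto
    then show ?thesis using d0 by (simp add: power_mult_distrib)
  qed
  define B where "B = c T * (d * D^2) + (\<Sum>t=1..T. et t * (norm (g t))^2 / 2)"
  have main: "(\<Sum>t=1..T. f t (th t)) - (\<Sum>t=1..T. f t z) \<le> B" if zF: "z \<in> F" for z
  proof -
    define a where "a t = (norm (th t - z))^2" for t
    have step: "f t (th t) - f t z \<le> c t * (a t - a (Suc t)) + et t * (norm (g t))^2 / 2"
      if t: "t \<in> {1..T}" for t
    proof -
      have "f t (th t) + g t \<bullet> (z - th t) \<le> f t z"
        using grad_ineq[OF fconv[OF t] thF zF fgrad[OF t thF]] t by (auto simp: g_def)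
      then have i1: "f t (th t) - f t z \<le> g t \<bullet> (th t - z)" by (simp add: inner_diff_right)
      have etp: "et t > 0" using vpos[of t] t eta d0 by (auto simp: et_def)
      have cet: "c t = 1 / (2 * et t)" using vpos[of t] t eta d0 by (auto simp: et_def c_def)
      have "th (Suc t) = closest_point F (th t - et t *\<^sub>R g t)" using thS[of t] t by (simp add: proj_eq)
      then have "norm (th (Suc t) - z) \<le> norm (th t - et t *\<^sub>R g t - z)"
        using closest_point_lipschitz[OF conv clo Fne, of "th t - et t *\<^sub>R g t" z]
          closest_point_self[OF zF] by (simp add: dist_norm)
      then have "a (Suc t) \<le> (norm ((th t - z) - et t *\<^sub>R g t))^2"
        unfolding a_def by (intro power_mono) (auto simp: algebra_simps)
      also have "\<dots> = a t - 2 * et t * (g t \<bullet> (th t - z)) + (et t)^2 * (norm (g t))^2"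
        unfolding a_def power2_norm_eq_inner
        by (simp add: inner_diff_left inner_diff_right inner_commute algebra_simps power2_eq_square)
      finally have "2 * et t * (g t \<bullet> (th t - z)) \<le> a t - a (Suc t) + (et t)^2 * (norm (g t))^2"
        by simp
      then have "g t \<bullet> (th t - z) \<le> (a t - a (Suc t)) / (2 * et t) + et t * (norm (g t))^2 / 2"
        using etp by (simp add: field_simps power2_eq_square)
      then show ?thesis using i1 cet by simp
    qed
    have "(\<Sum>t=1..T. f t (th t)) - (\<Sum>t=1..T. f t z) = (\<Sum>t=1..T. f t (th t) - f t z)"
      by (simp add: sum_subtractf)
    also have "\<dots> \<le> (\<Sum>t=1..T. c t * (a t - a (Suc t)) + et t * (norm (g t))^2 / 2)"
      by (intro sum_mono step) auto
    also have "\<dots> = (\<Sum>t=1..T. c t * (a t - a (Suc t))) + (\<Sum>t=1..T. et t * (norm (g t))^2 / 2)"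
      by (simp add: sum.distrib)
    also have "(\<Sum>t=1..T. c t * (a t - a (Suc t))) \<le> c T * (d * D^2) - c T * a (Suc T)"
    proof (rule telescope[OF _ _ _ _ T1])
      fix t :: nat assume t: "1 \<le> t"
      show "c t \<le> c (Suc t)"
        using vmono[of t 1] vpos[of t] t eta d0 unfolding c_def
        by (intro divide_right_mono real_sqrt_le_mono mult_mono) auto
      show "0 \<le> c t" using vpos[of t] t eta d0 by (auto simp: c_def)
      show "0 \<le> a t" by (simp add: a_def)
      show "a t \<le> d * D^2" using distD[OF thF[OF t] zF] by (simp add: a_def)
    qed
    also have "c T * (d * D^2) - c T * a (Suc T) \<le> c T * (d * D^2)"
      using vpos[of T] T1 eta d0 by (auto simp: c_def a_def)
    finally show ?thesis by (simp add: B_def)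
  qed
  have inf: "(\<Sum>t=1..T. f t (th t)) - B \<le> (INF th\<in>F. \<Sum>t=1..T. f t th)"
    by (rule cINF_greatest[OF Fne]) (use main in force)
  have B1: "c T * (d * D^2) = D\<^sup>2 * sqrt (d * vh T * real T) / (2 * \<eta>)"
  proof -
    have "sqrt (d * vh T * real T) = sqrt (d * d * (real T * vh T / d))"
      using d0 by (simp add: field_simps)
    also have "\<dots> = sqrt (d * d) * sqrt (real T * vh T / d)"
      by (rule real_sqrt_mult)
    also have "\<dots> = d * sqrt (real T * vh T / d)"
      using d0 by simp
    finally show ?thesis by (simp add: c_def)
  qed
  have B2: "(\<Sum>t=1..T. et t * (norm (g t))^2 / 2)
      \<le> d powr (3/2) * G\<^sup>2 * \<eta> * (2 * sqrt (real T) - 1) / (2 * sqrt (vh 1))"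
  proof -
    define K where "K = d * sqrt d * G^2 * \<eta> / (2 * sqrt (vh 1))"
    have K0: "K \<ge> 0" using d0 eta v1 by (simp add: K_def vh_def)
    have "et t * (norm (g t))^2 / 2 \<le> K * (1 / sqrt (real t))" if t: "t \<in> {1..T}" for t
    proof -
      have et_eq: "et t = \<eta> * sqrt d / (sqrt (real t) * sqrt (vh t))"
        using d0 vpos[of t] t by (simp add: et_def real_sqrt_divide real_sqrt_mult)
      have "et t \<le> \<eta> * sqrt d / (sqrt (real t) * sqrt (vh 1))"
        unfolding et_eq using vpos[of t] t v1 eta d0
        by (intro divide_left_mono mult_left_mono real_sqrt_le_mono mult_pos_pos mult_nonneg_nonneg)
           (auto simp: vh_def)
      moreover have "et t \<ge> 0" using vpos[of t] t eta d0 by (auto simp: et_def)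
      ultimately have "et t * (norm (g t))^2 \<le> \<eta> * sqrt d / (sqrt (real t) * sqrt (vh 1)) * (d * G^2)"
        using gnorm[OF t] by (intro mult_mono) auto
      then show ?thesis by (simp add: K_def field_simps)
    qed
    then have "(\<Sum>t=1..T. et t * (norm (g t))^2 / 2) \<le> (\<Sum>t=1..T. K * (1 / sqrt (real t)))"
      by (intro sum_mono) auto
    also have "\<dots> = K * (\<Sum>t=1..T. 1 / sqrt (real t))" by (simp add: sum_distrib_left)
    also have "\<dots> \<le> K * (2 * sqrt (real T) - 1)"
      using sum_inv_sqrt[OF T1] K0 by (intro mult_left_mono) auto
    also have "\<dots> = d powr (3/2) * G\<^sup>2 * \<eta> * (2 * sqrt (real T) - 1) / (2 * sqrt (vh 1))"
    proof -
      have "d powr (3/2) = d * sqrt d"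
      proof -
        have "d powr (3/2) = d powr (1 + 1/2)" by simp
        also have "\<dots> = d powr 1 * d powr (1/2)" by (rule powr_add)
        finally have "d powr (3/2) = d powr 1 * d powr (1/2)" .
        then show ?thesis using d0 by (simp add: powr_half_sqrt)
      qed
      then show ?thesis by (simp add: K_def)
    qed
    finally show ?thesis .
  qed
  show ?thesis
    using inf B1 B2 unfolding B_def th_def vh_def d_def D_def by linarith
qed

end
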